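(* Let $V \subset \mathbb{R}^2$ be a finite point set in general position and $m \in \mathbb{N}$. For each $A \in \{{\rm NW},{\rm NE},{\rm SW},{\rm SE}\}$ the hypergraph $\mathcal{H}(V,\mathcal{R}_A,m)$ admits a hitting set $S_A$ such that: 1. For each $A$, letting $\sigma_A$ be the reflection $\sigma_{\rm NW}=\mathrm{id}$, $\sigma_{\rm NE}(x,y)=(-x,y)$, $\sigma_{\rm SW}(x,y)=(x,-y)$, $\sigma_{\rm SE}(x,y)=(-x,-y)$ (which maps $A$-quadrants to north-west quadrants), the set $X=\sigma_A(S_A)$ is a $2$-shallow hitting set of $\mathcal{H}(\sigma_A(V),\mathcal{R}_{\rm NW},m)$ satisfying, with respect to the point set $\sigma_A(V)$, properties (P) below. 2. Every hyperedge $E \neq E_t(V,m)$ of $\mathcal{H}(V,\mathcal{R}_{\rm NW},m)$ contains at most $2$ / $0$ / $1$ / $1$ points of $S_{\rm NW}$ / $S_{\rm NE}$ / $S_{\rm SW}$ / $S_{\rm SE}$ respectively. 3. Every hyperedge $E \neq E_t(V,m)$ of $\mathcal{H}(V,\mathcal{R}_{\rm NE},m)$ contains at most $0$ / $2$ / $1$ / $1$ points of $S_{\rm NW}$ / $S_{\rm NE}$ / $S_{\rm SW}$ / $S_{\rm SE}$. 4. Every hyperedge $E \neq E_b(V,m)$ of $\mathcal{H}(V,\mathcal{R}_{\rm SW},m)$ contains at most $1$ / $1$ / $2$ / $0$ points of $S_{\rm NW}$ / $S_{\rm NE}$ / $S_{\rm SW}$ / $S_{\rm SE}$. 5. Every hyperedge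 $E \neq E_b(V,m)$ of $\mathcal{H}(V,\mathcal{R}_{\rm SE},m)$ contains at most $1$ / $1$ / $0$ / $2$ points of $S_{\rm NW}$ / $S_{\rm NE}$ / $S_{\rm SW}$ / $S_{\rm SE}$. 6. The set $E_t(V,m)$ contains at most one point of each of $S_{\rm NW}, S_{\rm NE}, S_{\rm SW}, S_{\rm SE}$. 7. The set $E_b(V,m)$ contains at most one point of each of $S_{\rm NW}, S_{\rm NE}, S_{\rm SW}, S_{\rm SE}$. Properties (P) of a set $X$ with respect to a point set $W$: the points $x_1,\dots,x_n$ of $X$ have decreasing $x$- and decreasing $y$-coordinates; (i) $x_1$ is the leftmost of the $m$ topmost points of $W$; (ii) the set of the $m$ topmost points of $W$ contains exactly one point of $X$; (iii) for consecutive $x_j,x_{j+1}$, the set $\{(x,y) : x(x_{j+1}) \leq x \leq x(x_j),\ y \leq y(x_j)\}$ contains at least $m+1$ points of $W$; (iv) for consecutive $x_j,x_{j+1},x_{j+2}$, the axis-aligned rectangle with top-right corner $x_j$ and bottom-left corner $x_{j+2}$ contains at least $m+2$ points of $W$.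
   Context: Quadrant families: $\mathcal{R}_{\rm NW} = \{\{x \leq a, y \geq b\}\}$, $\mathcal{R}_{\rm NE} = \{\{x \geq a, y \geq b\}\}$, $\mathcal{R}_{\rm SW} = \{\{x \leq a, y \leq b\}\}$, $\mathcal{R}_{\rm SE} = \{\{x \geq a, y \leq b\}\}$ over all $a,b \in \mathbb{R}$. $\mathcal{H}(V,\mathcal{R},m)$ is the hypergraph on $V$ whose hyperedges are the sets $V \cap R$, $R \in \mathcal{R}$, of size exactly $m$. $E_t(V,m)$ (resp. $E_b(V,m)$) is the set of the $m$ topmost (resp. bottommost) points of $V$. General position: pairwise distinct $x$-coordinates, $y$-coordinates and values $x+y$. A set $X$ is a $t$-shallow hitting set of a hypergraph if every hyperedge contains at least one and at most $t$ points of $X$; a hitting set means every hyperedge contains at least one point of it. *)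

theory Defs
  imports Main "HOL.Real"
begin

type_synonym pt = "real \<times> real"

datatype quadrant = NW | NE | SW | SE

fun quad_fam :: "quadrant \<Rightarrow> pt set set" where
  "quad_fam NW = {{p. fst p \<le> a \<and> snd p \<ge> b} | a b. True}"
| "quad_fam NE = {{p. fst p \<ge> a \<and> snd p \<ge> b} | a b. True}"
| "quad_fam SW = {{p. fst p \<le> a \<and> snd p \<le> b} | a b. True}"
| "quad_fam SE = {{p. fst p \<ge> a \<and> snd p \<le> b} | a b. True}"

fun sigma :: "quadrant \<Rightarrow> pt \<Rightarrow> pt" where
  "sigma NW (x, y) = (x, y)"
| "sigma NE (x, y) = (- x, y)"
| "sigma SW (x, y) = (x, - y)"
| "sigma SE (x, y) = (- x, - y)"

definition hyperedges :: "pt set \<Rightarrow> pt set set \<Rightarrow> nat \<Rightarrow> pt set set" where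
  "hyperedges V Rs m = {V \<inter> R | R. R \<in> Rs \<and> card (V \<inter> R) = m}"

definition general_position :: "pt set \<Rightarrow> bool" where
  "general_position V \<longleftrightarrow> inj_on fst V \<and> inj_on snd V \<and> inj_on (\<lambda>p. fst p + snd p) V"

definition E_t :: "pt set \<Rightarrow> nat \<Rightarrow> pt set" where
  "E_t V m = {p \<in> V. card {q \<in> V. snd q > snd p} < m}"

definition E_b :: "pt set \<Rightarrow> nat \<Rightarrow> pt set" where
  "E_b V m = {p \<in> V. card {q \<in> V. snd q < snd p} < m}"

definition hitting_set :: "pt set \<Rightarrow> pt set set \<Rightarrow> pt set \<Rightarrow> bool" where
  "hitting_set V E S \<longleftrightarrow> S \<subseteq> V \<and> (\<forall>e\<in>E. S \<inter> e \<noteq> {})"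

definition shallow_hitting_set :: "nat \<Rightarrow> pt set \<Rightarrow> pt set set \<Rightarrow> pt set \<Rightarrow> bool" where
  "shallow_hitting_set t V E S \<longleftrightarrow> S \<subseteq> V \<and> (\<forall>e\<in>E. 1 \<le> card (S \<inter> e) \<and> card (S \<inter> e) \<le> t)"

definition props_P :: "nat \<Rightarrow> pt set \<Rightarrow> pt set \<Rightarrow> bool" where
  "props_P m W X \<longleftrightarrow>
    (\<exists>xs. set xs = X \<and> distinct xs \<and>
       sorted_wrt (\<lambda>p q. fst p > fst q \<and> snd p > snd q) xs \<and>
       \<comment> \<open>(i)\<close>
       (xs \<noteq> [] \<and> hd xs \<in> E_t W m \<and> (\<forall>q \<in> E_t W m. fst (hd xs) \<le> fst q)) \<and>
       \<comment> \<open>(ii)\<close>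
       card (X \<inter> E_t W m) = 1 \<and>
       \<comment> \<open>(iii)\<close>
       (\<forall>j. j + 1 < length xs \<longrightarrow>
          card {w \<in> W. fst (xs ! (j+1)) \<le> fst w \<and> fst w \<le> fst (xs ! j)
                        \<and> snd w \<le> snd (xs ! j)} \<ge> m + 1) \<and>
       \<comment> \<open>(iv)\<close>
       (\<forall>j. j + 2 < length xs \<longrightarrow>
          card {w \<in> W. fst (xs ! (j+2)) \<le> fst w \<and> fst w \<le> fst (xs ! j)
                        \<and> snd (xs ! (j+2)) \<le> snd w \<and> snd w \<le> snd (xs ! j)} \<ge> m + 2))"

end

theory Submission
  imports Defs
begin
definition lm :: "pt set \<Rightarrow> pt" where
  "lm T = (SOME p. p \<in> T \<and> (\<forall>q\<in>T. fst p \<le> fst q))"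

lemma lm_prop:
  assumes "finite T" "T \<noteq> {}"
  shows "lm T \<in> T \<and> (\<forall>q\<in>T. fst (lm T) \<le> fst q)"
proof -
  have "Min (fst ` T) \<in> fst ` T" using assms by simp
  then obtain p where p: "p \<in> T" "fst p = Min (fst ` T)" by auto
  have "\<forall>q\<in>T. fst p \<le> fst q" using p assms by simp
  then have "\<exists>p. p \<in> T \<and> (\<forall>q\<in>T. fst p \<le> fst q)" using p by blast
  then show ?thesis unfolding lm_def by (rule someI_ex)
qed

definition lft :: "pt set \<Rightarrow> pt \<Rightarrow> pt set" where
  "lft P p = {w\<in>P. fst w < fst p}"

lemma Et_sub: "E_t P m \<subseteq> P" unfolding E_t_def by auto

lemma Et_ne:
  assumes "finite P" "P \<noteq> {}" "0 < m"
  shows "E_t P m \<noteq> {}"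
proof -
  have "Max (snd ` P) \<in> snd ` P" using assms by simp
  then obtain p where p: "p \<in> P" "snd p = Max (snd ` P)" by auto
  have "snd q \<le> snd p" if "q \<in> P" for q using p assms that by simp
  then have "{q\<in>P. snd q > snd p} = {}" by (auto simp: not_less)
  then have "card {q\<in>P. snd q > snd p} = 0" by (simp only: card.empty)
  then have "p \<in> E_t P m" using p(1) assms(3) unfolding E_t_def by simp
  then show ?thesis by auto
qed

lemma lm_Et:
  assumes "finite P" "P \<noteq> {}" "0 < m"
  shows "lm (E_t P m) \<in> E_t P m \<and> (\<forall>q\<in>E_t P m. fst (lm (E_t P m)) \<le> fst q)"
  using lm_prop[of "E_t P m"] Et_ne[OF assms] assms(1) Et_sub[of P m]
  by (meson finite_subset)

function chn :: "nat \<Rightarrow> pt set \<Rightarrow> pt list" where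
  "chn m P = (if finite P \<and> P \<noteq> {} \<and> 0 < m then
      lm (E_t P m) # (if m \<le> card (lft P (lm (E_t P m))) then chn m (lft P (lm (E_t P m))) else [])
    else [])"
  by pat_completeness auto
termination
proof (relation "measure (\<lambda>(m,P). card P)")
  show "wf (measure (\<lambda>(m, P). card P))" by simp
next
  fix m :: nat and P :: "pt set"
  assume a: "finite P \<and> P \<noteq> {} \<and> 0 < m"
  then have "lm (E_t P m) \<in> P" using lm_Et[of P m] Et_sub[of P m] by blast
  then have "lft P (lm (E_t P m)) \<subset> P" unfolding lft_def by auto
  then show "((m, lft P (lm (E_t P m))), m, P) \<in> measure (\<lambda>(m, P). card P)"
    using a by (simp add: psubset_card_mono)
qed

declare chn.simps[simp del]

lemma chn_eq:
  assumes "finite P" "P \<noteq> {}" "0 < m"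
  shows "chn m P = lm (E_t P m) # (if m \<le> card (lft P (lm (E_t P m))) then chn m (lft P (lm (E_t P m))) else [])"
  using assms by (subst chn.simps) simp

lemma Et_below:
  assumes "finite P" "inj_on snd P" "t \<in> E_t P m" "w \<in> P" "w \<notin> E_t P m"
  shows "snd w < snd t"
proof (rule ccontr)
  assume "\<not> snd w < snd t"
  moreover have "t \<in> P" using assms(3) Et_sub by blast
  moreover have "w \<noteq> t" using assms by auto
  ultimately have "snd t < snd w" using assms(2,4) by (metis inj_on_def linorder_neqE_linordered_idom)
  then have "{q\<in>P. snd q > snd w} \<subseteq> {q\<in>P. snd q > snd t}" by auto
  then have "card {q\<in>P. snd q > snd w} \<le> card {q\<in>P. snd q > snd t}"
    using assms(1) by (intro card_mono) auto
  then have "w \<in> E_t P m" using assms(3,4) unfolding E_t_def by auto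
  then show False using assms(5) by simp
qed

lemma K:
  assumes "finite P" "inj_on snd P" "P \<noteq> {}" "0 < m" "w \<in> P" "fst w < fst (lm (E_t P m))"
  shows "w \<notin> E_t P m \<and> (\<forall>t\<in>E_t P m. snd w < snd t)"
proof -
  have "w \<notin> E_t P m" using lm_Et[OF assms(1,3,4)] assms(6) by force
  then show ?thesis using Et_below[OF assms(1,2) _ assms(5)] by blast
qed

lemma Et_card:
  assumes "finite P" "inj_on snd P" "m \<le> card P"
  shows "m \<le> card (E_t P m)"
proof -
  define r where "r p = card {q\<in>P. snd q > snd p}" for p :: pt
  have lt: "card {q\<in>P. snd q > snd p} < card {q\<in>P. snd q > snd p'}"
    if "p \<in> P" "p' \<in> P" "snd p' < snd p" for p p'
  proof -
    have "{q\<in>P. snd q > snd p} \<subset> {q\<in>P. snd q > snd p'}" using that by auto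
    then show ?thesis using assms(1) by (intro psubset_card_mono) auto
  qed
  have inj: "inj_on r P"
  proof (rule inj_onI)
    fix p p' assume a: "p \<in> P" "p' \<in> P" "r p = r p'"
    show "p = p'"
    proof (rule ccontr)
      assume "p \<noteq> p'"
      then have "snd p \<noteq> snd p'" using a assms(2) by (meson inj_onD)
      then show False using lt[of p p'] lt[of p' p] a unfolding r_def
        by (cases "snd p < snd p'") auto
    qed
  qed
  have sub: "r ` P \<subseteq> {..<card P}"
  proof
    fix k assume "k \<in> r ` P"
    then obtain p where p: "p \<in> P" "k = r p" by auto
    have "{q\<in>P. snd q > snd p} \<subset> P" using p by auto
    then show "k \<in> {..<card P}" using p assms(1) unfolding r_def by (simp add: psubset_card_mono)
  qed
  have eq: "r ` P = {..<card P}"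
    using card_subset_eq[OF _ sub] card_image[OF inj] by simp
  have "{..<m} \<subseteq> r ` E_t P m"
  proof
    fix k assume k: "k \<in> {..<m}"
    then have "k \<in> r ` P" using eq assms(3) by auto
    then obtain p where p: "p \<in> P" "k = r p" by auto
    then have "p \<in> E_t P m" using k unfolding E_t_def r_def by auto
    then show "k \<in> r ` E_t P m" using p by auto
  qed
  then have "m \<le> card (r ` E_t P m)"
    using card_mono[of "r ` E_t P m" "{..<m}"] assms(1) Et_sub[of P m]
    by (metis card_lessThan finite_imageI finite_subset)
  also have "\<dots> \<le> card (E_t P m)" using assms(1) Et_sub[of P m]
    by (meson card_image_le finite_subset)
  finally show ?thesis .
qed

definition R :: "pt \<Rightarrow> pt \<Rightarrow> bool" where
  "R p q \<longleftrightarrow> fst p > fst q \<and> snd p > snd q"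

lemma chn_sorted:
  "finite P \<Longrightarrow> inj_on snd P \<Longrightarrow> set (chn m P) \<subseteq> P \<and> sorted_wrt R (chn m P)"
proof (induction m P rule: chn.induct)
  case (1 m P)
  show ?case
  proof (cases "finite P \<and> P \<noteq> {} \<and> 0 < m")
    case False
    then have "chn m P = []" by (subst chn.simps) simp
    then show ?thesis by simp
  next
    case True
    define p where "p = lm (E_t P m)"
    have pE: "p \<in> E_t P m" using lm_Et[of P m] True p_def by blast
    have pP: "p \<in> P" using pE Et_sub by blast
    define tl' where "tl' = (if m \<le> card (lft P p) then chn m (lft P p) else [])"
    have eq: "chn m P = p # tl'" using chn_eq[of P m] True unfolding p_def tl'_def by simp
    have fl: "finite (lft P p)" "inj_on snd (lft P p)" using "1.prems" unfolding lft_def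
      by (auto intro: inj_on_subset)
    have IH: "set tl' \<subseteq> lft P p \<and> sorted_wrt R tl'"
      using "1.IH"[OF True _ fl[unfolded p_def]] unfolding tl'_def p_def by auto
    have "\<forall>q\<in>set tl'. R p q"
    proof
      fix q assume "q \<in> set tl'"
      then have q: "q \<in> P" "fst q < fst p" using IH unfolding lft_def by auto
      then have "snd q < snd p" using K[of P m q] True "1.prems" pE unfolding p_def by blast
      then show "R p q" using q unfolding R_def by simp
    qed
    then show ?thesis using eq IH pP unfolding lft_def by auto
  qed
qed

locale core =
  fixes W :: "pt set" and m :: nat
  assumes fin: "finite W" and ne: "W \<noteq> {}" and injs: "inj_on snd W" and m1: "1 \<le> m"
begin

definition xs where "xs = chn m W"
definition n where "n = length xs"
definition Pj where "Pj j = (if j = 0 then W else lft W (xs ! (j - 1)))"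
definition Tj where "Tj j = E_t (Pj j) m"

lemma sorted: "set xs \<subseteq> W" "sorted_wrt R xs"
  using chn_sorted[OF fin injs] unfolding xs_def by auto

lemma sorted_nth:
  assumes "i < j" "j < n"
  shows "fst (xs ! j) < fst (xs ! i) \<and> snd (xs ! j) < snd (xs ! i)"
  using sorted(2) assms unfolding sorted_wrt_iff_nth_less n_def R_def by auto

lemma xs_in: "j < n \<Longrightarrow> xs ! j \<in> W"
  using sorted(1) unfolding n_def by auto

lemma n_pos: "0 < n"
  using chn_eq[OF fin ne] m1 unfolding n_def xs_def by simp

lemma lft_lft: "fst p < fst a \<Longrightarrow> lft (lft W a) p = lft W p"
  unfolding lft_def by auto

lemma D1:
  "j < n \<Longrightarrow> drop j xs = chn m (Pj j) \<and> Pj j \<subseteq> W \<and> Pj j \<noteq> {} \<and> (0 < j \<longrightarrow> m \<le> card (Pj j))"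
proof (induction j)
  case 0
  then show ?case using ne unfolding Pj_def xs_def by simp
next
  case (Suc j)
  then have IH: "drop j xs = chn m (Pj j)" "Pj j \<subseteq> W" "Pj j \<noteq> {}" "0 < j \<longrightarrow> m \<le> card (Pj j)"
    by auto
  have finP: "finite (Pj j)" using IH(2) fin by (rule finite_subset)
  define p where "p = lm (E_t (Pj j) m)"
  have eq: "drop j xs = p # (if m \<le> card (lft (Pj j) p) then chn m (lft (Pj j) p) else [])"
    using IH chn_eq[OF finP IH(3)] m1 unfolding p_def by simp
  have "xs ! j = hd (drop j xs)" using Suc.prems by (simp add: hd_drop_conv_nth n_def)
  then have xj: "xs ! j = p" using eq by simp
  have "p \<in> E_t (Pj j) m" using lm_Et[OF finP IH(3)] m1 unfolding p_def by simp
  then have pP: "p \<in> Pj j" using Et_sub by blast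
  have lw: "lft (Pj j) p = lft W p"
  proof (cases j)
    case 0
    then show ?thesis unfolding Pj_def by simp
  next
    case (Suc k)
    then have "fst p < fst (xs ! k)" using pP unfolding Pj_def lft_def by simp
    then show ?thesis unfolding Pj_def using Suc lft_lft by simp
  qed
  have dr: "drop (Suc j) xs = (if m \<le> card (lft (Pj j) p) then chn m (lft (Pj j) p) else [])"
  proof -
    have "drop (Suc j) xs = tl (drop j xs)" by (simp add: drop_Suc tl_drop)
    then show ?thesis using eq by simp
  qed
  have "drop (Suc j) xs \<noteq> []" using Suc.prems unfolding n_def by simp
  then have c: "m \<le> card (lft (Pj j) p)" using dr by (cases "m \<le> card (lft (Pj j) p)") auto
  have PS: "Pj (Suc j) = lft W p" unfolding Pj_def using xj by simp
  have "Pj (Suc j) \<subseteq> W" using PS unfolding lft_def by auto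
  moreover have "Pj (Suc j) \<noteq> {}" using c lw PS m1 by auto
  moreover have "drop (Suc j) xs = chn m (Pj (Suc j))" using dr c lw PS by simp
  ultimately show ?case using c lw PS by simp
qed

lemma finP: "j < n \<Longrightarrow> finite (Pj j)"
proof -
  assume "j < n"
  then have "Pj j \<subseteq> W" using D1 by simp
  then show ?thesis using fin by (rule finite_subset)
qed

lemma injP: "j < n \<Longrightarrow> inj_on snd (Pj j)"
proof -
  assume "j < n"
  then have "Pj j \<subseteq> W" using D1 by simp
  then show ?thesis using injs by (rule inj_on_subset[rotated])
qed

lemma D2:
  assumes "j < n"
  shows "xs ! j = lm (Tj j) \<and> xs ! j \<in> Tj j \<and> (\<forall>t\<in>Tj j. fst (xs ! j) \<le> fst t)"
proof -
  have d: "drop j xs = chn m (Pj j)" "Pj j \<noteq> {}" using D1[OF assms] by auto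
  have "xs ! j = hd (drop j xs)" using assms unfolding n_def by (simp add: hd_drop_conv_nth)
  also have "\<dots> = lm (Tj j)" using d chn_eq[OF finP[OF assms] d(2)] m1 unfolding Tj_def by simp
  finally show ?thesis using lm_Et[OF finP[OF assms] d(2)] m1 unfolding Tj_def by simp
qed

lemma lft_P: "j < n \<Longrightarrow> lft (Pj j) (xs ! j) = lft W (xs ! j)"
proof (cases j)
  case 0
  then show ?thesis unfolding Pj_def by simp
next
  case (Suc k)
  assume j: "j < n"
  have "xs ! j \<in> Pj j" using D2[OF j] Et_sub unfolding Tj_def by blast
  then have "fst (xs ! j) < fst (xs ! k)" using Suc unfolding Pj_def lft_def by simp
  then show ?thesis unfolding Pj_def using Suc lft_lft by simp
qed

lemma D3:
  assumes "j < n"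
  shows "Suc j < n \<longleftrightarrow> m \<le> card (lft W (xs ! j))"
proof -
  have d: "drop j xs = chn m (Pj j)" "Pj j \<noteq> {}" using D1[OF assms] by auto
  have x: "xs ! j = lm (Tj j)" using D2[OF assms] by simp
  have eq: "drop j xs = xs ! j # (if m \<le> card (lft W (xs ! j)) then chn m (lft W (xs ! j)) else [])"
    using d chn_eq[OF finP[OF assms] d(2)] m1 lft_P[OF assms] x unfolding Tj_def by simp
  have ln: "length (drop j xs) = n - j" unfolding n_def by simp
  show ?thesis
  proof
    assume "Suc j < n"
    then have "length (drop j xs) \<ge> 2" using ln by simp
    then show "m \<le> card (lft W (xs ! j))" using eq by (cases "m \<le> card (lft W (xs ! j))") auto
  next
    assume c: "m \<le> card (lft W (xs ! j))"
    then have "lft W (xs ! j) \<noteq> {}" using m1 by auto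
    moreover have "finite (lft W (xs ! j))" using fin unfolding lft_def by simp
    ultimately have "chn m (lft W (xs ! j)) \<noteq> []" using chn_eq m1 by simp
    then have "length (drop j xs) \<ge> 2" using eq c by (cases "chn m (lft W (xs ! j))") auto
    then show "Suc j < n" using ln by simp
  qed
qed

lemma D5:
  assumes "j < n" "w \<in> lft W (xs ! j)"
  shows "w \<notin> Tj j \<and> (\<forall>t\<in>Tj j. snd w < snd t)"
proof -
  have w: "w \<in> Pj j" "fst w < fst (xs ! j)" using assms lft_P[OF assms(1)] unfolding lft_def by auto
  have a: "Pj j \<noteq> {}" using D1[OF assms(1)] by simp
  have b: "fst w < fst (lm (E_t (Pj j) m))" using w(2) D2[OF assms(1)] unfolding Tj_def by simp
  have c: "0 < m" using m1 by simp
  show ?thesis using K[OF finP[OF assms(1)] injP[OF assms(1)] a c w(1) b]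
    unfolding Tj_def .
qed

lemma D4:
  assumes "Suc j < n"
  shows "m \<le> card (Tj (Suc j)) \<and> Tj (Suc j) \<subseteq> lft W (xs ! j)"
proof -
  have P: "Pj (Suc j) = lft W (xs ! j)" unfolding Pj_def by simp
  have "m \<le> card (lft W (xs ! j))" using D3[of j] assms by simp
  then have c: "m \<le> card (Pj (Suc j))" using P by simp
  have "m \<le> card (Tj (Suc j))" unfolding Tj_def by (rule Et_card[OF finP[OF assms] injP[OF assms] c])
  moreover have "Tj (Suc j) \<subseteq> lft W (xs ! j)" unfolding Tj_def using Et_sub P by metis
  ultimately show ?thesis by simp
qed

end

context core begin

lemma xj_T: "j < n \<Longrightarrow> xs ! j \<in> Tj j" using D2 by blast

lemma T_fin: "j < n \<Longrightarrow> finite (Tj j)"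
  unfolding Tj_def using finP Et_sub finite_subset by metis

lemma below_prev:
  assumes "Suc j < n" "t \<in> Tj (Suc j)"
  shows "t \<in> W \<and> fst t < fst (xs ! j) \<and> snd t < snd (xs ! j) \<and> fst (xs ! Suc j) \<le> fst t"
proof -
  have l: "t \<in> lft W (xs ! j)" using D4[OF assms(1)] assms(2) by blast
  have j: "j < n" using assms by simp
  have "snd t < snd (xs ! j)" using D5[OF j l] xj_T[OF j] by blast
  then show ?thesis using l D2[OF assms(1)] assms(2) unfolding lft_def by auto
qed

lemma reg3:
  assumes "Suc j < n"
  shows "m + 1 \<le> card {w\<in>W. fst (xs ! Suc j) \<le> fst w \<and> fst w \<le> fst (xs ! j) \<and> snd w \<le> snd (xs ! j)}"
    (is "_ \<le> card ?S")
proof -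
  have j: "j < n" using assms by simp
  let ?T = "Tj (Suc j)"
  have sub: "insert (xs ! j) ?T \<subseteq> ?S"
  proof
    fix w assume "w \<in> insert (xs ! j) ?T"
    then show "w \<in> ?S"
    proof
      assume "w = xs ! j"
      then show ?thesis using xs_in[OF j] sorted_nth[of j "Suc j"] assms by auto
    next
      assume "w \<in> ?T"
      then show ?thesis using below_prev[OF assms] by fastforce
    qed
  qed
  have nin: "xs ! j \<notin> ?T"
  proof
    assume "xs ! j \<in> ?T"
    then have "fst (xs ! j) < fst (xs ! j)" using below_prev[OF assms] by blast
    then show False by simp
  qed
  have "m + 1 \<le> card (insert (xs ! j) ?T)"
    using D4[OF assms] nin T_fin[OF assms] by simp
  also have "\<dots> \<le> card ?S" using sub fin by (intro card_mono) auto
  finally show ?thesis .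
qed

lemma rect4:
  assumes "Suc (Suc j) < n"
  shows "m + 2 \<le> card {w\<in>W. fst (xs ! Suc (Suc j)) \<le> fst w \<and> fst w \<le> fst (xs ! j)
                 \<and> snd (xs ! Suc (Suc j)) \<le> snd w \<and> snd w \<le> snd (xs ! j)}"
    (is "_ \<le> card ?S")
proof -
  have j1: "Suc j < n" using assms by simp
  have j: "j < n" using assms by simp
  let ?T = "Tj (Suc j)"
  let ?z = "xs ! Suc (Suc j)"
  have zl: "?z \<in> lft W (xs ! Suc j)" using D4[OF assms] xj_T[OF assms] by blast
  have z: "?z \<notin> ?T \<and> (\<forall>t\<in>?T. snd ?z < snd t)" using D5[OF j1 zl] .
  have o1: "fst ?z < fst (xs ! Suc j)" "snd ?z < snd (xs ! Suc j)"
    using sorted_nth[of "Suc j" "Suc (Suc j)"] assms by auto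
  have o2: "fst ?z < fst (xs ! j)" "snd ?z < snd (xs ! j)"
    using sorted_nth[of j "Suc (Suc j)"] assms by auto
  have sub: "insert (xs ! j) (insert ?z ?T) \<subseteq> ?S"
  proof
    fix w assume "w \<in> insert (xs ! j) (insert ?z ?T)"
    then consider "w = xs ! j" | "w = ?z" | "w \<in> ?T" by blast
    then show "w \<in> ?S"
    proof cases
      case 1
      then show ?thesis using xs_in[OF j] o2 by auto
    next
      case 2
      then show ?thesis using xs_in[OF assms] o2 by auto
    next
      case 3
      have b: "w \<in> W" "fst w < fst (xs ! j)" "snd w < snd (xs ! j)" "fst (xs ! Suc j) \<le> fst w"
        using below_prev[OF j1 3] by auto
      have c: "snd ?z < snd w" using z 3 by blast
      have d: "fst ?z \<le> fst w" using o1(1) b(4) by linarith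
      show ?thesis using b c d by simp
    qed
  qed
  have n1: "xs ! j \<noteq> ?z" using o2 by auto
  have n2: "xs ! j \<notin> ?T"
  proof
    assume "xs ! j \<in> ?T"
    then have "fst (xs ! j) < fst (xs ! j)" using below_prev[OF j1] by blast
    then show False by simp
  qed
  have nin: "xs ! j \<notin> insert ?z ?T" using n1 n2 by simp
  have "m + 2 \<le> card (insert (xs ! j) (insert ?z ?T))"
    using D4[OF j1] nin z T_fin[OF j1] by simp
  also have "\<dots> \<le> card ?S" using sub fin by (intro card_mono) auto
  finally show ?thesis .
qed

lemma distinct_xs: "distinct xs"
  unfolding distinct_conv_nth n_def[symmetric]
proof (intro allI impI)
  fix i j assume "i < n" "j < n" "i \<noteq> j"
  then show "xs ! i \<noteq> xs ! j" using sorted_nth[of i j] sorted_nth[of j i]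
    by (cases "i < j") auto
qed

lemma set_xs: "set xs = {xs ! j | j. j < n}"
  unfolding n_def by (rule set_conv_nth)

lemma Et_xs: "set xs \<inter> E_t W m = {xs ! 0}"
proof
  show "{xs ! 0} \<subseteq> set xs \<inter> E_t W m"
    using xj_T[OF n_pos] n_pos unfolding Tj_def Pj_def n_def by auto
next
  show "set xs \<inter> E_t W m \<subseteq> {xs ! 0}"
  proof
    fix q assume q: "q \<in> set xs \<inter> E_t W m"
    then obtain j where j: "j < n" "q = xs ! j" using set_xs by auto
    show "q \<in> {xs ! 0}"
    proof (cases j)
      case 0
      then show ?thesis using j by simp
    next
      case (Suc k)
      then have "fst q < fst (xs ! 0)" using sorted_nth[of 0 j] j by auto
      then have "q \<in> lft W (xs ! 0)" using xs_in[OF j(1)] j unfolding lft_def by simp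
      then have "q \<notin> Tj 0" using D5[OF n_pos] by blast
      then show ?thesis using q unfolding Tj_def Pj_def by simp
    qed
  qed
qed

lemma propsP: "props_P m W (set xs)"
  unfolding props_P_def
proof (intro exI conjI)
  show "set xs = set xs" ..
  show "distinct xs" by (rule distinct_xs)
  show "sorted_wrt (\<lambda>p q. fst q < fst p \<and> snd q < snd p) xs" using sorted(2) unfolding R_def .
  show "xs \<noteq> []" using n_pos unfolding n_def by auto
  have h: "hd xs = xs ! 0" using n_pos unfolding n_def by (simp add: hd_conv_nth)
  show "hd xs \<in> E_t W m" using xj_T[OF n_pos] h unfolding Tj_def Pj_def by simp
  have "\<forall>t\<in>Tj 0. fst (xs ! 0) \<le> fst t" using D2[OF n_pos] by blast
  then show "\<forall>q\<in>E_t W m. fst (hd xs) \<le> fst q" unfolding h Tj_def Pj_def by simp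
  show "card (set xs \<inter> E_t W m) = 1" using Et_xs by simp
  show "\<forall>j. j + 1 < length xs \<longrightarrow>
          m + 1 \<le> card {w \<in> W. fst (xs ! (j+1)) \<le> fst w \<and> fst w \<le> fst (xs ! j) \<and> snd w \<le> snd (xs ! j)}"
    using reg3 unfolding n_def by simp
  show "\<forall>j. j + 2 < length xs \<longrightarrow>
          m + 2 \<le> card {w \<in> W. fst (xs ! (j+2)) \<le> fst w \<and> fst w \<le> fst (xs ! j)
                        \<and> snd (xs ! (j+2)) \<le> snd w \<and> snd w \<le> snd (xs ! j)}"
  proof (intro allI impI)
    fix j assume "j + 2 < length xs"
    then have "Suc (Suc j) < n" unfolding n_def by simp
    from rect4[OF this] show "m + 2 \<le> card {w \<in> W. fst (xs ! (j+2)) \<le> fst w \<and> fst w \<le> fst (xs ! j)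
                        \<and> snd (xs ! (j+2)) \<le> snd w \<and> snd w \<le> snd (xs ! j)}"
      by (simp add: numeral_2_eq_2)
  qed
qed

end

definition qf :: "real \<Rightarrow> real \<Rightarrow> pt set set" where
  "qf s t = {{p. s * fst p \<le> a \<and> b \<le> t * snd p} | a b. True}"

lemma hyp_mem:
  assumes "e \<in> hyperedges W (qf s t) m"
  obtains a b where "e = {p\<in>W. s * fst p \<le> a \<and> b \<le> t * snd p}" "card e = m"
  using assms unfolding hyperedges_def qf_def by blast

lemma card_two: "card {x, y} \<le> 2"
  by (cases "x = y") auto

context core begin

lemma sorted_le:
  assumes "i \<le> j" "j < n"
  shows "fst (xs ! j) \<le> fst (xs ! i) \<and> snd (xs ! j) \<le> snd (xs ! i)"
proof (cases "i = j")
  case True then show ?thesis by simp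
next
  case False
  then show ?thesis using sorted_nth[of i j] assms by fastforce
qed

lemma card_Tj_ge:
  assumes "k < n" "m \<le> card W"
  shows "m \<le> card (Tj k)"
proof -
  have "m \<le> card (Pj k)"
  proof (cases k)
    case 0 then show ?thesis using assms unfolding Pj_def by simp
  next
    case (Suc k') then show ?thesis using D1[OF assms(1)] by simp
  qed
  then show ?thesis unfolding Tj_def by (rule Et_card[OF finP[OF assms(1)] injP[OF assms(1)]])
qed

lemma x0_left: "q \<in> E_t W m \<Longrightarrow> fst (xs ! 0) \<le> fst q"
proof -
  assume q: "q \<in> E_t W m"
  have "\<forall>t\<in>Tj 0. fst (xs ! 0) \<le> fst t" using D2[OF n_pos] by blast
  then show ?thesis using q unfolding Tj_def Pj_def by simp
qed

lemma Tj_W: "k < n \<Longrightarrow> Tj k \<subseteq> W"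
  using D1[of k] Et_sub[of "Pj k" m] unfolding Tj_def by blast

lemma C1_hit:
  assumes e: "e = {p\<in>W. fst p \<le> a \<and> b \<le> snd p}" "card e = m"
  shows "\<exists>j<n. xs ! j \<in> e"
proof (rule ccontr)
  assume H: "\<not> (\<exists>j<n. xs ! j \<in> e)"
  have fe: "finite e" using e fin by simp
  show False
  proof (cases "\<exists>j. j < n \<and> fst (xs ! j) \<le> a")
    case True
    define j0 where "j0 = (LEAST j. j < n \<and> fst (xs ! j) \<le> a)"
    have j0: "j0 < n" "fst (xs ! j0) \<le> a" using LeastI_ex[OF True] unfolding j0_def by auto
    have before: "\<not> (k < n \<and> fst (xs ! k) \<le> a)" if "k < j0" for k
      using not_less_Least[of k "\<lambda>j. j < n \<and> fst (xs ! j) \<le> a"] that unfolding j0_def by blast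
    have eP: "e \<subseteq> Pj j0"
    proof (cases j0)
      case 0 then show ?thesis using e unfolding Pj_def by auto
    next
      case (Suc k)
      then have "a < fst (xs ! k)" using before[of k] j0 by auto
      then show ?thesis using e Suc unfolding Pj_def lft_def by auto
    qed
    have "xs ! j0 \<notin> e" using H j0 by blast
    then have sb: "snd (xs ! j0) < b" using j0 xs_in[OF j0(1)] e by auto
    have "e \<subseteq> {q\<in>Pj j0. snd q > snd (xs ! j0)}" using eP e sb by auto
    then have "m \<le> card {q\<in>Pj j0. snd q > snd (xs ! j0)}"
      using e(2) finP[OF j0(1)] by (metis (no_types, lifting) card_mono finite_subset mem_Collect_eq subsetI)
    moreover have "xs ! j0 \<in> E_t (Pj j0) m" using xj_T[OF j0(1)] unfolding Tj_def .
    ultimately show False unfolding E_t_def by auto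
  next
    case False
    define l where "l = n - 1"
    have l: "l < n" "\<not> Suc l < n" using n_pos unfolding l_def by auto
    have "e \<subseteq> lft W (xs ! l)" using False l e unfolding lft_def by auto
    then have "card e \<le> card (lft W (xs ! l))" using fin unfolding lft_def by (intro card_mono) auto
    moreover have "\<not> m \<le> card (lft W (xs ! l))" using D3[OF l(1)] l(2) by simp
    ultimately show False using e(2) by simp
  qed
qed

lemma C1_shallow:
  assumes e: "e = {p\<in>W. fst p \<le> a \<and> b \<le> snd p}" "card e = m"
  shows "card (set xs \<inter> e) \<le> 2"
proof -
  have ex: "\<exists>j. j < n \<and> xs ! j \<in> e" using C1_hit[OF e] by blast
  define i0 where "i0 = (LEAST j. j < n \<and> xs ! j \<in> e)"
  have i0: "i0 < n" "xs ! i0 \<in> e" using LeastI_ex[OF ex] unfolding i0_def by auto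
  have ge: "i0 \<le> k" if "k < n" "xs ! k \<in> e" for k
    using Least_le[of "\<lambda>j. j < n \<and> xs ! j \<in> e" k] that unfolding i0_def by blast
  have le: "k \<le> Suc i0" if k: "k < n" "xs ! k \<in> e" for k
  proof (rule ccontr)
    assume "\<not> k \<le> Suc i0"
    then have kk: "Suc (Suc i0) \<le> k" by simp
    then have s: "Suc (Suc i0) < n" using k by simp
    let ?S = "{w\<in>W. fst (xs ! Suc (Suc i0)) \<le> fst w \<and> fst w \<le> fst (xs ! i0)
                 \<and> snd (xs ! Suc (Suc i0)) \<le> snd w \<and> snd w \<le> snd (xs ! i0)}"
    have sub: "?S \<subseteq> e"
    proof
      fix w assume w: "w \<in> ?S"
      have "fst (xs ! i0) \<le> a" using i0 e by auto
      moreover have "b \<le> snd (xs ! k)" using k e by auto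
      moreover have "snd (xs ! k) \<le> snd (xs ! Suc (Suc i0))" using sorted_le[OF kk k(1)] by simp
      ultimately show "w \<in> e" using w e by auto
    qed
    have "m + 2 \<le> card ?S" using rect4[OF s] .
    also have "\<dots> \<le> card e" using sub e fin by (intro card_mono) auto
    finally show False using e(2) by simp
  qed
  have "set xs \<inter> e \<subseteq> {xs ! i0, xs ! Suc i0}"
  proof
    fix q assume q: "q \<in> set xs \<inter> e"
    then obtain k where k: "k < n" "q = xs ! k" using set_xs by auto
    have "i0 \<le> k" "k \<le> Suc i0" using ge[of k] le[of k] k q by auto
    then have "k = i0 \<or> k = Suc i0" by auto
    then show "q \<in> {xs ! i0, xs ! Suc i0}" using k by auto
  qed
  then have "card (set xs \<inter> e) \<le> card {xs ! i0, xs ! Suc i0}" by (intro card_mono) auto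
  then show ?thesis using card_two[of "xs ! i0" "xs ! Suc i0"] by linarith
qed

lemma C4:
  assumes e: "e = {p\<in>W. - fst p \<le> a \<and> b \<le> snd p}" "card e = m" and ne: "e \<noteq> E_t W m"
  shows "set xs \<inter> e = {}"
proof -
  have fe: "finite e" using e fin by simp
  have mW: "m \<le> card W" using e fin by (metis (no_types, lifting) card_mono mem_Collect_eq subsetI)
  have "xs ! j \<notin> e" if j: "j < n" for j
  proof (cases j)
    case 0
    show ?thesis
    proof
      assume x0: "xs ! j \<in> e"
      have cE: "m \<le> card (E_t W m)" using Et_card[OF fin injs mW] .
      have "\<not> E_t W m \<subseteq> e"
      proof
        assume "E_t W m \<subseteq> e"
        then have "E_t W m = e" using card_seteq[OF fe] cE e(2) by simp
        then show False using ne by simp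
      qed
      then obtain u where u: "u \<in> E_t W m" "u \<notin> e" by blast
      have uW: "u \<in> W" using u Et_sub by blast
      have "b \<le> snd u"
      proof (rule ccontr)
        assume "\<not> b \<le> snd u"
        then have "e \<subseteq> {q\<in>W. snd q > snd u}" using e by auto
        then have "m \<le> card {q\<in>W. snd q > snd u}" using e(2) fin
          by (metis (no_types, lifting) card_mono finite_subset mem_Collect_eq subsetI)
        then show False using u(1) unfolding E_t_def by auto
      qed
      then have "fst u < fst (xs ! j)" using u uW x0 e by auto
      moreover have "fst (xs ! 0) \<le> fst u" using x0_left u(1) by simp
      ultimately show False using 0 by simp
    qed
  next
    case (Suc k)
    have k: "k < n" using j Suc by simp
    show ?thesis
    proof
      assume xj: "xs ! j \<in> e"
      have o: "fst (xs ! j) < fst (xs ! k)" using sorted_nth[of k j] j Suc by simp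
      have wl: "xs ! j \<in> lft W (xs ! k)" using o xs_in[OF j] unfolding lft_def by simp
      have d5: "xs ! j \<notin> Tj k \<and> (\<forall>t\<in>Tj k. snd (xs ! j) < snd t)" using D5[OF k wl] .
      have sub: "insert (xs ! j) (Tj k) \<subseteq> e"
      proof
        fix w assume "w \<in> insert (xs ! j) (Tj k)"
        then show "w \<in> e"
        proof
          assume "w = xs ! j" then show ?thesis using xj by simp
        next
          assume wt: "w \<in> Tj k"
          have "fst (xs ! k) \<le> fst w" using D2[OF k] wt by blast
          moreover have "snd (xs ! j) < snd w" using d5 wt by blast
          moreover have "w \<in> W" using Tj_W[OF k] wt by blast
          ultimately show ?thesis using xj o e by auto
        qed
      qed
      have "m + 1 \<le> card (insert (xs ! j) (Tj k))"
        using card_Tj_ge[OF k mW] d5 T_fin[OF k] by simp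
      also have "\<dots> \<le> card e" using sub fe by (intro card_mono) auto
      finally show False using e(2) by simp
    qed
  qed
  then show ?thesis using set_xs by auto
qed

lemma last_only:
  assumes "\<And>i. Suc i < n \<Longrightarrow> xs ! i \<notin> e"
  shows "card (e \<inter> set xs) \<le> 1"
proof -
  have "e \<inter> set xs \<subseteq> {xs ! (n - 1)}"
  proof
    fix q assume q: "q \<in> e \<inter> set xs"
    then obtain k where k: "k < n" "q = xs ! k" using set_xs by auto
    have "\<not> Suc k < n" using assms[of k] k q by auto
    then have "k = n - 1" using k by simp
    then show "q \<in> {xs ! (n - 1)}" using k by simp
  qed
  then have "card (e \<inter> set xs) \<le> card {xs ! (n - 1)}" by (intro card_mono) auto
  then show ?thesis by simp
qed

lemma C5:
  assumes e: "e = {p\<in>W. fst p \<le> a \<and> b \<le> - snd p}" "card e = m"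
  shows "card (e \<inter> set xs) \<le> 1"
proof (rule last_only)
  fix i assume i: "Suc i < n"
  have ii: "i < n" using i by simp
  show "xs ! i \<notin> e"
  proof
    assume xi: "xs ! i \<in> e"
    have sub: "insert (xs ! i) (Tj (Suc i)) \<subseteq> e"
    proof
      fix w assume "w \<in> insert (xs ! i) (Tj (Suc i))"
      then show "w \<in> e"
      proof
        assume "w = xs ! i" then show ?thesis using xi by simp
      next
        assume wt: "w \<in> Tj (Suc i)"
        then show ?thesis using below_prev[OF i wt] xi e by auto
      qed
    qed
    have nin: "xs ! i \<notin> Tj (Suc i)"
    proof
      assume "xs ! i \<in> Tj (Suc i)"
      then have "fst (xs ! i) < fst (xs ! i)" using below_prev[OF i] by blast
      then show False by simp
    qed
    have "m + 1 \<le> card (insert (xs ! i) (Tj (Suc i)))"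
      using D4[OF i] nin T_fin[OF i] by simp
    also have "\<dots> \<le> card e" using sub e fin by (intro card_mono) auto
    finally show False using e(2) by simp
  qed
qed

lemma C8: "card (E_b W m \<inter> set xs) \<le> 1"
proof (rule last_only)
  fix i assume i: "Suc i < n"
  show "xs ! i \<notin> E_b W m"
  proof
    assume xi: "xs ! i \<in> E_b W m"
    have "Tj (Suc i) \<subseteq> {q\<in>W. snd q < snd (xs ! i)}" using below_prev[OF i] by blast
    then have "card (Tj (Suc i)) \<le> card {q\<in>W. snd q < snd (xs ! i)}" using fin by (intro card_mono) auto
    then have "m \<le> card {q\<in>W. snd q < snd (xs ! i)}" using D4[OF i] by linarith
    then show False using xi unfolding E_b_def by auto
  qed
qed

lemma C7: "card (E_t W m \<inter> set xs) \<le> 1"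
  using Et_xs by (simp add: Int_commute)

lemma C6:
  assumes e: "e = {p\<in>W. - fst p \<le> a \<and> b \<le> - snd p}" "card e = m"
  shows "card (e \<inter> set xs) \<le> 1"
proof -
  have no2: "False" if ik: "i < k" "k < n" "xs ! i \<in> e" "xs ! k \<in> e" for i k
  proof -
    have s: "Suc i < n" using ik by simp
    let ?S = "{w\<in>W. fst (xs ! Suc i) \<le> fst w \<and> fst w \<le> fst (xs ! i) \<and> snd w \<le> snd (xs ! i)}"
    have sub: "?S \<subseteq> e"
    proof
      fix w assume w: "w \<in> ?S"
      have "fst (xs ! k) \<le> fst (xs ! Suc i)" using sorted_le[of "Suc i" k] ik by simp
      then show "w \<in> e" using w ik e by auto
    qed
    have "m + 1 \<le> card ?S" using reg3[OF s] .
    also have "\<dots> \<le> card e" using sub e fin by (intro card_mono) auto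
    finally show False using e(2) by simp
  qed
  have "\<forall>x\<in>e \<inter> set xs. \<forall>y\<in>e \<inter> set xs. x = y"
  proof (intro ballI)
    fix x y assume x: "x \<in> e \<inter> set xs" and y: "y \<in> e \<inter> set xs"
    obtain i where i: "i < n" "x = xs ! i" using x set_xs by auto
    obtain k where k: "k < n" "y = xs ! k" using y set_xs by auto
    show "x = y"
    proof (cases i k rule: linorder_cases)
      case less then show ?thesis using no2[of i k] i k x y by auto
    next
      case equal then show ?thesis using i k by simp
    next
      case greater then show ?thesis using no2[of k i] i k x y by auto
    qed
  qed
  then show ?thesis using card_le_Suc0_iff_eq[of "e \<inter> set xs"] fin e by simp
qed

end

fun sx :: "quadrant \<Rightarrow> real" where
  "sx NW = 1" | "sx NE = -1" | "sx SW = 1" | "sx SE = -1"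
fun sy :: "quadrant \<Rightarrow> real" where
  "sy NW = 1" | "sy NE = 1" | "sy SW = -1" | "sy SE = -1"

lemma sigma_eq: "sigma A p = (sx A * fst p, sy A * snd p)"
  by (cases A; cases p) auto

lemma sx_pm: "sx A = 1 \<or> sx A = -1" by (cases A) auto
lemma sy_pm: "sy A = 1 \<or> sy A = -1" by (cases A) auto

lemma sigma_inv[simp]: "sigma A (sigma A p) = p"
  by (cases A; cases p) auto

lemma inj_sigma: "inj (sigma A)"
  by (metis injI sigma_inv)

lemma sigma_img: "sigma A ` S = {q. sigma A q \<in> S}"
  by (auto simp: image_iff) (metis sigma_inv)

lemma sigma_img_img[simp]: "sigma A ` sigma A ` S = S"
  by (simp add: image_comp comp_def)

lemma quad_fam_form:
  assumes "QQ \<in> quad_fam B"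
  shows "\<exists>a b. QQ = {p. sx B * fst p \<le> a \<and> b \<le> sy B * snd p}"
proof (cases B)
  case NW
  then show ?thesis using assms by auto
next
  case NE
  then obtain a b where "QQ = {p. fst p \<ge> a \<and> snd p \<ge> b}" using assms by auto
  then have "QQ = {p. sx B * fst p \<le> -a \<and> b \<le> sy B * snd p}" using NE by auto
  then show ?thesis by blast
next
  case SW
  then obtain a b where "QQ = {p. fst p \<le> a \<and> snd p \<le> b}" using assms by auto
  then have "QQ = {p. sx B * fst p \<le> a \<and> -b \<le> sy B * snd p}" using SW by auto
  then show ?thesis by blast
next
  case SE
  then obtain a b where "QQ = {p. fst p \<ge> a \<and> snd p \<le> b}" using assms by auto
  then have "QQ = {p. sx B * fst p \<le> -a \<and> -b \<le> sy B * snd p}" using SE by auto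
  then show ?thesis by blast
qed

lemma sxx: "sx A * (sx A * x) = x" using sx_pm[of A] by auto
lemma syy: "sy A * (sy A * x) = x" using sy_pm[of A] by auto

lemma card_sigma: "card (sigma A ` X) = card X"
  by (rule card_image) (metis inj_on_subset subset_UNIV inj_sigma)

lemma sigma_Int: "sigma A ` (X \<inter> Y) = sigma A ` X \<inter> sigma A ` Y"
  by (rule image_Int) (rule inj_sigma)

lemma mem_sigma: "r \<in> sigma A ` X \<longleftrightarrow> sigma A r \<in> X"
  unfolding sigma_img by simp

lemma snd_sig: "snd r = sy A * snd (sigma A r)"
  by (simp add: sigma_eq syy)

lemma snd_sig2: "snd (sigma A p) = sy A * snd p"
  by (simp add: sigma_eq)

lemma hyp_transport:
  assumes "E \<in> hyperedges V (quad_fam B) m"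
  shows "sigma A ` E \<in> hyperedges (sigma A ` V) (qf (sx A * sx B) (sy A * sy B)) m"
proof -
  obtain QQ where QQ: "QQ \<in> quad_fam B" "E = V \<inter> QQ" "card E = m"
    using assms unfolding hyperedges_def by auto
  obtain a b where ab: "QQ = {p. sx B * fst p \<le> a \<and> b \<le> sy B * snd p}"
    using quad_fam_form[OF QQ(1)] by (elim exE) (rule that)
  define QQ' where "QQ' = {p. sx A * sx B * fst p \<le> a \<and> b \<le> sy A * sy B * snd p}"
  have ee: "sigma A ` E = sigma A ` V \<inter> QQ'"
  proof (rule set_eqI)
    fix q
    have h1: "sx B * fst (sigma A q) = sx A * sx B * fst q" unfolding sigma_eq by simp
    have h2: "sy B * snd (sigma A q) = sy A * sy B * snd q" unfolding sigma_eq by simp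
    show "q \<in> sigma A ` E \<longleftrightarrow> q \<in> sigma A ` V \<inter> QQ'"
      unfolding QQ(2) mem_sigma Int_iff ab QQ'_def mem_Collect_eq h1 h2 by (rule refl)
  qed
  have cc: "card (sigma A ` E) = m" using QQ(3) card_sigma by simp
  have qq: "QQ' \<in> qf (sx A * sx B) (sy A * sy B)"
    unfolding qf_def QQ'_def by (rule CollectI, rule exI[of _ a], rule exI[of _ b], rule conjI, rule refl, rule TrueI)
  show ?thesis
    unfolding hyperedges_def
    apply (rule CollectI, rule exI[of _ QQ'])
    apply (intro conjI)
      apply (rule ee)
     apply (rule qq)
    apply (subst ee[symmetric])
    apply (rule cc)
    done
qed

lemma above_transport:
  assumes "p \<in> V"
  shows "{r \<in> sigma A ` V. snd r > snd (sigma A p)} = sigma A ` {r\<in>V. sy A * snd r > sy A * snd p}"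
    and "{r \<in> sigma A ` V. snd r < snd (sigma A p)} = sigma A ` {r\<in>V. sy A * snd r < sy A * snd p}"
proof -
  show "{r \<in> sigma A ` V. snd r > snd (sigma A p)} = sigma A ` {r\<in>V. sy A * snd r > sy A * snd p}"
  proof (rule set_eqI)
    fix r
    show "r \<in> {r \<in> sigma A ` V. snd r > snd (sigma A p)} \<longleftrightarrow> r \<in> sigma A ` {r\<in>V. sy A * snd r > sy A * snd p}"
      unfolding mem_sigma mem_Collect_eq snd_sig2 using snd_sig[of r A] by (simp add: syy)
  qed
  show "{r \<in> sigma A ` V. snd r < snd (sigma A p)} = sigma A ` {r\<in>V. sy A * snd r < sy A * snd p}"
  proof (rule set_eqI)
    fix r
    show "r \<in> {r \<in> sigma A ` V. snd r < snd (sigma A p)} \<longleftrightarrow> r \<in> sigma A ` {r\<in>V. sy A * snd r < sy A * snd p}"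
      unfolding mem_sigma mem_Collect_eq snd_sig2 using snd_sig[of r A] by (simp add: syy)
  qed
qed

lemma Et_transport:
  "sigma A ` E_t V m = (if sy A = 1 then E_t (sigma A ` V) m else E_b (sigma A ` V) m)"
  "sigma A ` E_b V m = (if sy A = 1 then E_b (sigma A ` V) m else E_t (sigma A ` V) m)"
proof -
  have c1: "card {r \<in> sigma A ` V. snd r > snd (sigma A p)} = card {r\<in>V. sy A * snd r > sy A * snd p}"
    if "p \<in> V" for p using above_transport(1)[OF that, of A] card_sigma by simp
  have c2: "card {r \<in> sigma A ` V. snd r < snd (sigma A p)} = card {r\<in>V. sy A * snd r < sy A * snd p}"
    if "p \<in> V" for p using above_transport(2)[OF that, of A] card_sigma by simp
  have g1: "sigma A ` {p\<in>V. card {r\<in>V. sy A * snd r > sy A * snd p} < m} = E_t (sigma A ` V) m"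
  proof (rule set_eqI)
    fix q
    have "q \<in> sigma A ` V \<Longrightarrow> card {r \<in> sigma A ` V. snd r > snd q} = card {r\<in>V. sy A * snd r > sy A * snd (sigma A q)}"
      using c1[of "sigma A q"] unfolding mem_sigma by simp
    then show "q \<in> sigma A ` {p\<in>V. card {r\<in>V. sy A * snd r > sy A * snd p} < m} \<longleftrightarrow> q \<in> E_t (sigma A ` V) m"
      unfolding E_t_def mem_Collect_eq mem_sigma[of q] by auto
  qed
  have g2: "sigma A ` {p\<in>V. card {r\<in>V. sy A * snd r < sy A * snd p} < m} = E_b (sigma A ` V) m"
  proof (rule set_eqI)
    fix q
    have "q \<in> sigma A ` V \<Longrightarrow> card {r \<in> sigma A ` V. snd r < snd q} = card {r\<in>V. sy A * snd r < sy A * snd (sigma A q)}"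
      using c2[of "sigma A q"] unfolding mem_sigma by simp
    then show "q \<in> sigma A ` {p\<in>V. card {r\<in>V. sy A * snd r < sy A * snd p} < m} \<longleftrightarrow> q \<in> E_b (sigma A ` V) m"
      unfolding E_b_def mem_Collect_eq mem_sigma[of q] by auto
  qed
  show "sigma A ` E_t V m = (if sy A = 1 then E_t (sigma A ` V) m else E_b (sigma A ` V) m)"
  proof (cases "sy A = 1")
    case True
    then show ?thesis using g1 unfolding E_t_def by simp
  next
    case False
    then have "sy A = -1" using sy_pm by blast
    then show ?thesis using g2 unfolding E_t_def by simp
  qed
  show "sigma A ` E_b V m = (if sy A = 1 then E_b (sigma A ` V) m else E_t (sigma A ` V) m)"
  proof (cases "sy A = 1")
    case True
    then show ?thesis using g2 unfolding E_b_def by simp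
  next
    case False
    then have "sy A = -1" using sy_pm by blast
    then show ?thesis using g1 unfolding E_b_def by simp
  qed
qed

definition cb :: "real \<Rightarrow> real \<Rightarrow> nat" where
  "cb s t = (if s = 1 \<and> t = 1 then 2 else if s = -1 \<and> t = 1 then 0 else 1)"

context core begin

lemma core_gen:
  assumes e: "e \<in> hyperedges W (qf s t) m" and s: "s = 1 \<or> s = -1" and t: "t = 1 \<or> t = -1"
    and ex: "s = -1 \<and> t = 1 \<longrightarrow> e \<noteq> E_t W m"
  shows "card (e \<inter> set xs) \<le> cb s t"
proof -
  obtain a b where ab: "e = {p\<in>W. s * fst p \<le> a \<and> b \<le> t * snd p}" "card e = m"
    using hyp_mem[OF e] by blast
  consider "s = 1" "t = 1" | "s = -1" "t = 1" | "s = 1" "t = -1" | "s = -1" "t = -1"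
    using s t by blast
  then show ?thesis
  proof cases
    case 1
    then have "e = {p\<in>W. fst p \<le> a \<and> b \<le> snd p}" using ab by simp
    then show ?thesis using C1_shallow ab(2) 1 unfolding cb_def by (simp add: Int_commute)
  next
    case 2
    then have "e = {p\<in>W. - fst p \<le> a \<and> b \<le> snd p}" using ab by simp
    then show ?thesis using C4 ab(2) 2 ex unfolding cb_def by (simp add: Int_commute)
  next
    case 3
    then have "e = {p\<in>W. fst p \<le> a \<and> b \<le> - snd p}" using ab by simp
    then show ?thesis using C5 ab(2) 3 unfolding cb_def by simp
  next
    case 4
    then have "e = {p\<in>W. - fst p \<le> a \<and> b \<le> - snd p}" using ab by simp
    then show ?thesis using C6 ab(2) 4 unfolding cb_def by simp
  qed
qed

end

lemma sx2: "sx A * sx A = 1" using sx_pm[of A] by auto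
lemma sy2: "sy A * sy A = 1" using sy_pm[of A] by auto

lemma inj_snd_img:
  assumes "inj_on snd V"
  shows "inj_on snd (sigma A ` V)"
proof (rule inj_onI)
  fix q1 q2 assume q: "q1 \<in> sigma A ` V" "q2 \<in> sigma A ` V" "snd q1 = snd q2"
  have "snd (sigma A q1) = snd (sigma A q2)" using q(3) by (simp add: snd_sig2)
  moreover have "sigma A q1 \<in> V" "sigma A q2 \<in> V" using q(1,2) mem_sigma by auto
  ultimately have "sigma A q1 = sigma A q2" using assms by (meson inj_onD)
  then show "q1 = q2" by (metis sigma_inv)
qed

lemma per_A:
  fixes A :: quadrant
  assumes fin: "finite V" and ne: "V \<noteq> {}" and gp: "general_position V" and m1: "1 \<le> m"
  defines "S \<equiv> sigma A ` set (chn m (sigma A ` V))"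
  shows "hitting_set V (hyperedges V (quad_fam A) m) S"
    and "shallow_hitting_set 2 (sigma A ` V) (hyperedges (sigma A ` V) (quad_fam NW) m) (sigma A ` S)
         \<and> props_P m (sigma A ` V) (sigma A ` S)"
    and "\<And>B E. E \<in> hyperedges V (quad_fam B) m \<Longrightarrow> (if sy B = 1 then E \<noteq> E_t V m else E \<noteq> E_b V m)
           \<Longrightarrow> card (E \<inter> S) \<le> cb (sx A * sx B) (sy A * sy B)"
    and "card (E_t V m \<inter> S) \<le> 1"
    and "card (E_b V m \<inter> S) \<le> 1"
proof -
  define W where "W = sigma A ` V"
  have injV: "inj_on snd V" using gp unfolding general_position_def by simp
  interpret core W m
    using fin ne m1 inj_snd_img[OF injV, of A] unfolding W_def by unfold_locales auto
  have X: "set (chn m (sigma A ` V)) = set xs" using xs_def unfolding W_def by simp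
  have SX: "sigma A ` S = set xs" unfolding S_def X by simp
  have cardS: "card (Y \<inter> S) = card (sigma A ` Y \<inter> set xs)" for Y
  proof -
    have "card (Y \<inter> S) = card (sigma A ` (Y \<inter> S))" using card_sigma by simp
    also have "sigma A ` (Y \<inter> S) = sigma A ` Y \<inter> set xs" using sigma_Int SX by simp
    finally show ?thesis .
  qed
  have finX: "finite (set xs)" by simp
  show "hitting_set V (hyperedges V (quad_fam A) m) S"
    unfolding hitting_set_def
  proof (intro conjI ballI)
    show "S \<subseteq> V" unfolding S_def X using sorted(1) unfolding W_def
      by (metis image_mono sigma_img_img)
  next
    fix E assume E: "E \<in> hyperedges V (quad_fam A) m"
    have "sigma A ` E \<in> hyperedges W (qf 1 1) m"
      using hyp_transport[OF E, of A] sx2 sy2 unfolding W_def by simp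
    then obtain a b where ab: "sigma A ` E = {p\<in>W. 1 * fst p \<le> a \<and> b \<le> 1 * snd p}" "card (sigma A ` E) = m"
      by (rule hyp_mem)
    then obtain j where j: "j < n" "xs ! j \<in> sigma A ` E" using C1_hit[of "sigma A ` E" a b] by auto
    have "sigma A (xs ! j) \<in> E" using j(2) mem_sigma by blast
    moreover have "sigma A (xs ! j) \<in> S" using j(1) unfolding S_def X n_def by simp
    ultimately show "S \<inter> E \<noteq> {}" by blast
  qed
  show "shallow_hitting_set 2 (sigma A ` V) (hyperedges (sigma A ` V) (quad_fam NW) m) (sigma A ` S)
         \<and> props_P m (sigma A ` V) (sigma A ` S)"
    unfolding SX W_def[symmetric] shallow_hitting_set_def
  proof (intro conjI ballI)
    show "set xs \<subseteq> W" using sorted(1) .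
    show "props_P m W (set xs)" by (rule propsP)
  next
    fix e assume e: "e \<in> hyperedges W (quad_fam NW) m"
    then obtain QQ where QQ: "QQ \<in> quad_fam NW" "e = W \<inter> QQ" "card e = m"
      unfolding hyperedges_def by auto
    then obtain a b where "QQ = {p. fst p \<le> a \<and> snd p \<ge> b}" by auto
    then have ee: "e = {p\<in>W. fst p \<le> a \<and> b \<le> snd p}" using QQ(2) by auto
    show "card (set xs \<inter> e) \<le> 2" using C1_shallow[OF ee QQ(3)] .
    obtain j where "j < n" "xs ! j \<in> e" using C1_hit[OF ee QQ(3)] by auto
    then have "set xs \<inter> e \<noteq> {}" unfolding n_def by (metis IntI empty_iff nth_mem)
    then show "1 \<le> card (set xs \<inter> e)" using finX
      by (metis One_nat_def Suc_leI card_gt_0_iff finite_Int)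
  qed
  show "card (E \<inter> S) \<le> cb (sx A * sx B) (sy A * sy B)"
    if E: "E \<in> hyperedges V (quad_fam B) m" and c: "if sy B = 1 then E \<noteq> E_t V m else E \<noteq> E_b V m" for B E
  proof -
    have e: "sigma A ` E \<in> hyperedges W (qf (sx A * sx B) (sy A * sy B)) m"
      using hyp_transport[OF E, of A] unfolding W_def .
    have s: "sx A * sx B = 1 \<or> sx A * sx B = -1" using sx_pm[of A] sx_pm[of B] by auto
    have t: "sy A * sy B = 1 \<or> sy A * sy B = -1" using sy_pm[of A] sy_pm[of B] by auto
    have ex: "sx A * sx B = -1 \<and> sy A * sy B = 1 \<longrightarrow> sigma A ` E \<noteq> E_t W m"
    proof
      assume "sx A * sx B = -1 \<and> sy A * sy B = 1"
      then have st: "sy A * sy B = 1" by simp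
      show "sigma A ` E \<noteq> E_t W m"
      proof (cases "sy B = 1")
        case True
        then have "sy A = 1" using st by simp
        then have "sigma A ` E_t V m = E_t W m" using Et_transport(1)[of A V m] unfolding W_def by simp
        moreover have "E \<noteq> E_t V m" using c True by simp
        ultimately show ?thesis using inj_sigma by (metis sigma_img_img)
      next
        case False
        then have "sy B = -1" using sy_pm by blast
        then have "sy A = -1" using st sy_pm[of A] by auto
        then have "sigma A ` E_b V m = E_t W m" using Et_transport(2)[of A V m] unfolding W_def by simp
        moreover have "E \<noteq> E_b V m" using c False by simp
        ultimately show ?thesis by (metis sigma_img_img)
      qed
    qed
    have "card (sigma A ` E \<inter> set xs) \<le> cb (sx A * sx B) (sy A * sy B)"
      by (rule core_gen[OF e s t ex])
    then show ?thesis using cardS by simp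
  qed
  show "card (E_t V m \<inter> S) \<le> 1"
  proof (cases "sy A = 1")
    case True
    then have "sigma A ` E_t V m = E_t W m" using Et_transport(1)[of A V m] unfolding W_def by simp
    then show ?thesis using cardS C7 by simp
  next
    case False
    then have "sigma A ` E_t V m = E_b W m" using Et_transport(1)[of A V m] unfolding W_def by simp
    then show ?thesis using cardS C8 by simp
  qed
  show "card (E_b V m \<inter> S) \<le> 1"
  proof (cases "sy A = 1")
    case True
    then have "sigma A ` E_b V m = E_b W m" using Et_transport(2)[of A V m] unfolding W_def by simp
    then show ?thesis using cardS C8 by simp
  next
    case False
    then have "sigma A ` E_b V m = E_t W m" using Et_transport(2)[of A V m] unfolding W_def by simp
    then show ?thesis using cardS C7 by simp
  qed
qed

theorem corollary15:
  fixes V :: "(real \<times> real) set" and m :: nat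
  assumes "finite V" and "V \<noteq> {}" and "general_position V" and "m \<ge> 1"
  shows "\<exists>S :: quadrant \<Rightarrow> (real \<times> real) set.
    (\<forall>A. hitting_set V (hyperedges V (quad_fam A) m) (S A)) \<and>
    (\<forall>A. shallow_hitting_set 2 (sigma A ` V) (hyperedges (sigma A ` V) (quad_fam NW) m)
            (sigma A ` S A)
         \<and> props_P m (sigma A ` V) (sigma A ` S A)) \<and>
    (\<forall>E \<in> hyperedges V (quad_fam NW) m. E \<noteq> E_t V m \<longrightarrow>
       card (E \<inter> S NW) \<le> 2 \<and> card (E \<inter> S NE) \<le> 0 \<and> card (E \<inter> S SW) \<le> 1 \<and> card (E \<inter> S SE) \<le> 1) \<and>
    (\<forall>E \<in> hyperedges V (quad_fam NE) m. E \<noteq> E_t V m \<longrightarrow>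
       card (E \<inter> S NW) \<le> 0 \<and> card (E \<inter> S NE) \<le> 2 \<and> card (E \<inter> S SW) \<le> 1 \<and> card (E \<inter> S SE) \<le> 1) \<and>
    (\<forall>E \<in> hyperedges V (quad_fam SW) m. E \<noteq> E_b V m \<longrightarrow>
       card (E \<inter> S NW) \<le> 1 \<and> card (E \<inter> S NE) \<le> 1 \<and> card (E \<inter> S SW) \<le> 2 \<and> card (E \<inter> S SE) \<le> 0) \<and>
    (\<forall>E \<in> hyperedges V (quad_fam SE) m. E \<noteq> E_b V m \<longrightarrow>
       card (E \<inter> S NW) \<le> 1 \<and> card (E \<inter> S NE) \<le> 1 \<and> card (E \<inter> S SW) \<le> 0 \<and> card (E \<inter> S SE) \<le> 2) \<and>
    (\<forall>A. card (E_t V m \<inter> S A) \<le> 1) \<and>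
    (\<forall>A. card (E_b V m \<inter> S A) \<le> 1)"
proof -
  define S where "S A = sigma A ` set (chn m (sigma A ` V))" for A
  note P = per_A[OF assms, folded S_def]
  have X: "card (E \<inter> S A) \<le> cb (sx A * sx B) (sy A * sy B)"
    if "E \<in> hyperedges V (quad_fam B) m" "if sy B = 1 then E \<noteq> E_t V m else E \<noteq> E_b V m" for A B E
    using P(3)[OF that] .
  show ?thesis
  proof (intro exI[of _ S] conjI allI ballI impI)
    fix A show "hitting_set V (hyperedges V (quad_fam A) m) (S A)" using P(1) .
  next
    fix A show "shallow_hitting_set 2 (sigma A ` V) (hyperedges (sigma A ` V) (quad_fam NW) m) (sigma A ` S A)"
      using P(2) by blast
  next
    fix A show "props_P m (sigma A ` V) (sigma A ` S A)" using P(2) by blast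
  next
    fix A show "card (E_t V m \<inter> S A) \<le> 1" using P(4) .
  next
    fix A show "card (E_b V m \<inter> S A) \<le> 1" using P(5) .
  next
    fix E assume e1: "E \<in> hyperedges V (quad_fam NW) m" and e2: "E \<noteq> E_t V m"
    have "card (E \<inter> S A) \<le> cb (sx A * sx NW) (sy A * sy NW)" for A using X[OF e1] e2 by simp
    from this[of NW] this[of NE] this[of SW] this[of SE]
    show "card (E \<inter> S NW) \<le> 2" "card (E \<inter> S NE) \<le> 0" "card (E \<inter> S SW) \<le> 1" "card (E \<inter> S SE) \<le> 1"
      by (simp_all add: cb_def)
  next
    fix E assume e1: "E \<in> hyperedges V (quad_fam NE) m" and e2: "E \<noteq> E_t V m"
    have "card (E \<inter> S A) \<le> cb (sx A * sx NE) (sy A * sy NE)" for A using X[OF e1] e2 by simp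
    from this[of NW] this[of NE] this[of SW] this[of SE]
    show "card (E \<inter> S NW) \<le> 0" "card (E \<inter> S NE) \<le> 2" "card (E \<inter> S SW) \<le> 1" "card (E \<inter> S SE) \<le> 1"
      by (simp_all add: cb_def)
  next
    fix E assume e1: "E \<in> hyperedges V (quad_fam SW) m" and e2: "E \<noteq> E_b V m"
    have "card (E \<inter> S A) \<le> cb (sx A * sx SW) (sy A * sy SW)" for A using X[OF e1] e2 by simp
    from this[of NW] this[of NE] this[of SW] this[of SE]
    show "card (E \<inter> S NW) \<le> 1" "card (E \<inter> S NE) \<le> 1" "card (E \<inter> S SW) \<le> 2" "card (E \<inter> S SE) \<le> 0"
      by (simp_all add: cb_def)
  next
    fix E assume e1: "E \<in> hyperedges V (quad_fam SE) m" and e2: "E \<noteq> E_b V m"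
    have "card (E \<inter> S A) \<le> cb (sx A * sx SE) (sy A * sy SE)" for A using X[OF e1] e2 by simp
    from this[of NW] this[of NE] this[of SW] this[of SE]
    show "card (E \<inter> S NW) \<le> 1" "card (E \<inter> S NE) \<le> 1" "card (E \<inter> S SW) \<le> 0" "card (E \<inter> S SE) \<le> 2"
      by (simp_all add: cb_def)
  qed
qed

end
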